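(* Under the standing assumptions below, let $\{x_n\}\subset X$ and $\{G_n\}\subset\mathcal{L}(X,Y)$ be sequences with $x_n\to x$ in $X$ for some $x\in X$, $G_n\in\partial_B^{sw}S(x_n)$ for all $n\in\mathbb{N}$, and $G_n\to G$ in the weak operator topology of $\mathcal{L}(X,Y)$ for some $G\in\mathcal{L}(X,Y)$. Then $G\in\partial_B^{sw}S(x)$.
   Context: Standing assumptions: $(\Omega,\Sigma,\mu)$ is a complete measure space with real Lebesgue spaces $L^p(\Omega)$, $p\in[1,\infty]$. $Y$ is a real separable reflexive Banach space with $Y\subset L^q(\Omega)$ and the inclusion $Y\hookrightarrow L^q(\Omega)$ continuous and compact, for a fixed $q\in[1,\infty]$. $X$ is a real separable Banach space. $U$ is a real reflexive Banach space with $U\subset X$ and the inclusion $U\hookrightarrow X$ continuous and compact. The map $S:X\to Y$ satisfies $S(\lambda x_1+(1-\lambda)x_2)\le\lambda S(x_1)+(1-\lambda)S(x_2)$ $\mu$-a.e. in $\Omega$ for all $x_1,x_2\in X$, $\lambda\in[0,1]$; and there is an exponent $r\in[1,\infty]$ such that for every $x\in X$ there are $C,\varepsilon>0$ with $\|S(x_1)-S(x_2)\|_Y\le C\|x_1-x_2\|_X$ for all $x_1,x_2\in X$ with $\|x_i-x\|_X\le\varepsilon$, $i=1,2$, and $\|S(x_1+z)-S(x_1)\|_{L^r(\Omega)}\le C\|z\|_U$ for all $x_1\in X$, $z\in U$ with $\|x_1-x\|_X\le\varepsilon$, $\|z\|_U\le\varepsilon$. $S$ is Gâteaux differentiable at $x\in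 X$ if for all $z\in X$ the limit $S'(x;z):=\lim_{t\to0^+}(S(x+tz)-S(x))/t$ exists in $Y$ and $z\mapsto S'(x;z)$ is linear and continuous; then $S'(x):=S'(x;\cdot)\in\mathcal{L}(X,Y)$. $\mathcal{D}_S$ denotes the set of points where $S$ is Gâteaux differentiable (it is known to be dense in $X$). WOT convergence $G_n\to G$ in $\mathcal{L}(X,Y)$ means $G_nz\rightharpoonup Gz$ weakly in $Y$ for all $z\in X$. The strong-weak Bouligand differential is $\partial_B^{sw}S(x):=\{G\in\mathcal{L}(X,Y): \exists\{x_n\}\subset\mathcal{D}_S \text{ with } x_n\to x \text{ in } X \text{ and } S'(x_n)\to G \text{ in the WOT}\}$. *)

theory Defs
  imports "HOL-Analysis.Analysis" "HOL-Probability.Probability"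
begin

definition separable_type :: "'a::metric_space itself \<Rightarrow> bool" where
  "separable_type _ \<longleftrightarrow> separable_space (euclidean :: 'a topology)"

definition reflexive_type :: "'a::real_normed_vector itself \<Rightarrow> bool" where
  "reflexive_type _ \<longleftrightarrow>
     (\<forall>\<Phi> :: ('a \<Rightarrow>\<^sub>L real) \<Rightarrow>\<^sub>L real. \<exists>a::'a. \<forall>f. blinfun_apply \<Phi> f = blinfun_apply f a)"

definition weakly_tendsto :: "(nat \<Rightarrow> 'a::real_normed_vector) \<Rightarrow> 'a \<Rightarrow> bool" where
  "weakly_tendsto ys y \<longleftrightarrow>
     (\<forall>f :: 'a \<Rightarrow>\<^sub>L real. (\<lambda>n. blinfun_apply f (ys n)) \<longlonglongrightarrow> blinfun_apply f y)"

definition wot_tendsto ::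
  "(nat \<Rightarrow> ('x::real_normed_vector \<Rightarrow>\<^sub>L 'y::real_normed_vector)) \<Rightarrow> ('x \<Rightarrow>\<^sub>L 'y) \<Rightarrow> bool" where
  "wot_tendsto Gs G \<longleftrightarrow> (\<forall>z. weakly_tendsto (\<lambda>n. blinfun_apply (Gs n) z) (blinfun_apply G z))"

text \<open>The L^p(M) norm of a real function (p in [1,\<infinity>]), valued in ennreal so that
  the value \<infinity> means "not in L^p". For p = \<infinity> it is the essential supremum of |f|.\<close>
definition Lp_norm :: "'w measure \<Rightarrow> ennreal \<Rightarrow> ('w \<Rightarrow> real) \<Rightarrow> ennreal" where
  "Lp_norm M p f =
     (if p = \<infinity> then esssup M (\<lambda>w. ennreal \<bar>f w\<bar>)
      else (let I = (\<integral>\<^sup>+ w. ennreal (\<bar>f w\<bar> powr enn2real p) \<partial>M)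
            in if I = \<infinity> then \<infinity> else ennreal (enn2real I powr (1 / enn2real p))))"

definition in_Lp :: "'w measure \<Rightarrow> ennreal \<Rightarrow> ('w \<Rightarrow> real) \<Rightarrow> bool" where
  "in_Lp M p f \<longleftrightarrow> f \<in> borel_measurable M \<and> Lp_norm M p f < \<infinity>"

text \<open>Y is (identified with) a subspace of L^q(M) via \<iota>, with continuous and compact inclusion.
  \<iota> y is a representative of the equivalence class of y; \<iota> is linear modulo a.e. equality
  and injective modulo a.e. equality.\<close>
definition compact_Lq_embedding ::
  "'w measure \<Rightarrow> ennreal \<Rightarrow> ('y::real_normed_vector \<Rightarrow> 'w \<Rightarrow> real) \<Rightarrow> bool" where
  "compact_Lq_embedding M q \<iota> \<longleftrightarrow>
     (\<forall>y. in_Lp M q (\<iota> y)) \<and>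
     (\<forall>a b y1 y2. AE w in M. \<iota> (a *\<^sub>R y1 + b *\<^sub>R y2) w = a * \<iota> y1 w + b * \<iota> y2 w) \<and>
     (\<forall>y1 y2. (AE w in M. \<iota> y1 w = \<iota> y2 w) \<longrightarrow> y1 = y2) \<and>
     (\<exists>C::real. \<forall>y. Lp_norm M q (\<iota> y) \<le> ennreal (C * norm y)) \<and>
     (\<forall>ys :: nat \<Rightarrow> 'y. bounded (range ys) \<longrightarrow>
        (\<exists>(r :: nat \<Rightarrow> nat) g. strict_mono r \<and> in_Lp M q g \<and>
               (\<lambda>k. Lp_norm M q (\<lambda>w. \<iota> (ys (r k)) w - g w)) \<longlonglongrightarrow> 0))"

definition compact_embedding :: "('u::real_normed_vector \<Rightarrow> 'x::real_normed_vector) \<Rightarrow> bool" where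
  "compact_embedding j \<longleftrightarrow>
     bounded_linear j \<and> inj j \<and>
     (\<forall>us. bounded (range us) \<longrightarrow> (\<exists>(r :: nat \<Rightarrow> nat) v. strict_mono r \<and> (\<lambda>k. j (us (r k))) \<longlonglongrightarrow> v))"

definition gateaux_deriv :: "('x::real_normed_vector \<Rightarrow> 'y::real_normed_vector) \<Rightarrow> 'x \<Rightarrow> ('x \<Rightarrow>\<^sub>L 'y) \<Rightarrow> bool" where
  "gateaux_deriv S x G \<longleftrightarrow>
     (\<forall>z. ((\<lambda>t. (1 / t) *\<^sub>R (S (x + t *\<^sub>R z) - S x)) \<longlongrightarrow> blinfun_apply G z) (at_right (0::real)))"

definition gateaux_points :: "('x::real_normed_vector \<Rightarrow> 'y::real_normed_vector) \<Rightarrow> 'x set" where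
  "gateaux_points S = {x. \<exists>G. gateaux_deriv S x G}"

definition gateaux_derivative :: "('x::real_normed_vector \<Rightarrow> 'y::real_normed_vector) \<Rightarrow> 'x \<Rightarrow> ('x \<Rightarrow>\<^sub>L 'y)" where
  "gateaux_derivative S x = (THE G. gateaux_deriv S x G)"

definition bouligand_sw :: "('x::real_normed_vector \<Rightarrow> 'y::real_normed_vector) \<Rightarrow> 'x \<Rightarrow> ('x \<Rightarrow>\<^sub>L 'y) set" where
  "bouligand_sw S x = {G. \<exists>xs. (\<forall>n. xs n \<in> gateaux_points S) \<and> xs \<longlonglongrightarrow> x \<and>
                            wot_tendsto (\<lambda>n. gateaux_derivative S (xs n)) G}"

definition standing_assumptions ::
  "'w measure \<Rightarrow> ennreal \<Rightarrow> ennreal \<Rightarrow> ('y::banach \<Rightarrow> 'w \<Rightarrow> real) \<Rightarrow>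
   ('u::banach \<Rightarrow> 'x::banach) \<Rightarrow> ('x \<Rightarrow> 'y) \<Rightarrow> bool" where
  "standing_assumptions M q r \<iota> j S \<longleftrightarrow>
     complete_measure M \<and>
     1 \<le> q \<and> 1 \<le> r \<and>
     separable_type TYPE('y) \<and> reflexive_type TYPE('y) \<and> compact_Lq_embedding M q \<iota> \<and>
     separable_type TYPE('x) \<and>
     reflexive_type TYPE('u) \<and> compact_embedding j \<and>
     (\<forall>x1 x2 lam. 0 \<le> lam \<and> lam \<le> (1::real) \<longrightarrow>
        (AE w in M. \<iota> (S (lam *\<^sub>R x1 + (1 - lam) *\<^sub>R x2)) w
                      \<le> lam * \<iota> (S x1) w + (1 - lam) * \<iota> (S x2) w)) \<and>
     (\<forall>x. \<exists>C>0. \<exists>\<epsilon>>0.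
        (\<forall>x1 x2. norm (x1 - x) \<le> \<epsilon> \<and> norm (x2 - x) \<le> \<epsilon> \<longrightarrow>
                  norm (S x1 - S x2) \<le> C * norm (x1 - x2)) \<and>
        (\<forall>x1 z. norm (x1 - x) \<le> \<epsilon> \<and> norm z \<le> \<epsilon> \<longrightarrow>
                  Lp_norm M r (\<lambda>w. \<iota> (S (x1 + j z)) w - \<iota> (S x1) w) \<le> ennreal (C * norm z)))"

end

theory Submission
  imports Defs
begin

definition hb_good :: "('a::real_vector \<Rightarrow> real) \<Rightarrow> 'a \<Rightarrow> ('a \<times> real) set \<Rightarrow> bool" where
 "hb_good p g Gr \<longleftrightarrow>
   (\<forall>x a b. (x,a)\<in>Gr \<longrightarrow> (x,b)\<in>Gr \<longrightarrow> a=b) \<and>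
   (0,0) \<in> Gr \<and> (\<forall>x a y b. (x,a)\<in>Gr \<longrightarrow> (y,b)\<in>Gr \<longrightarrow> (x+y,a+b)\<in>Gr) \<and>
   (\<forall>c x a. (x,a)\<in>Gr \<longrightarrow> (c *\<^sub>R x, c*a)\<in>Gr) \<and> (g, p g) \<in> Gr \<and>
   (\<forall>x a. (x,a)\<in>Gr \<longrightarrow> a \<le> p x)"

locale sublin =
  fixes p :: "'a::real_vector \<Rightarrow> real"
  assumes padd: "\<And>x y. p (x + y) \<le> p x + p y"
    and phom: "\<And>c x. c \<ge> 0 \<Longrightarrow> p (c *\<^sub>R x) = c * p x"
begin

lemma p0: "p 0 = 0" using phom[of 0 0] by simp

lemma pneg: "0 \<le> p x + p (- x)" using padd[of x "-x"] p0 by simp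

lemma dom_line: "t * p g \<le> p (t *\<^sub>R g)"
proof (cases "t \<ge> 0")
  case True then show ?thesis using phom by simp
next
  case False
  then have "p (t *\<^sub>R g) = p ((-t) *\<^sub>R (-g))" by simp
  also have "\<dots> = (-t) * p (-g)" using False phom[of "-t" "-g"] by simp
  finally have e: "p (t *\<^sub>R g) = (-t) * p (-g)" .
  have "0 \<le> (-t) * (p g + p (-g))" using pneg[of g] False by (intro mult_nonneg_nonneg) auto
  then show ?thesis using e by (simp add: algebra_simps)
qed

lemma base_good: "hb_good p g {(t *\<^sub>R g, t * p g) | t. True}"
  unfolding hb_good_def
proof (intro conjI allI impI)
  fix x a b
  assume a: "(x,a) \<in> {(t *\<^sub>R g, t * p g) | t. True}" and b: "(x,b) \<in> {(t *\<^sub>R g, t * p g) | t. True}"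
  obtain t where t: "x = t *\<^sub>R g" "a = t * p g" using a by blast
  obtain s where s: "x = s *\<^sub>R g" "b = s * p g" using b by blast
  note ts = t s
  show "a = b"
  proof (cases "g = 0")
    case True then show ?thesis using ts p0 by simp
  next
    case False then have "t = s" using ts by (metis scaleR_cancel_right)
    then show ?thesis using ts by simp
  qed
next
  show "(0, 0) \<in> {(t *\<^sub>R g, t * p g) | t. True}" by (rule CollectI, rule exI[of _ 0]) simp
next
  fix x a y b
  assume "(x,a) \<in> {(t *\<^sub>R g, t * p g) | t. True}" "(y,b) \<in> {(t *\<^sub>R g, t * p g) | t. True}"
  then obtain t s where "x = t *\<^sub>R g" "a = t * p g" "y = s *\<^sub>R g" "b = s * p g" by auto
  then show "(x+y, a+b) \<in> {(t *\<^sub>R g, t * p g) | t. True}"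
    by (intro CollectI exI[of _ "t+s"]) (simp add: scaleR_add_left distrib_right)
next
  fix c x a
  assume "(x,a) \<in> {(t *\<^sub>R g, t * p g) | t. True}"
  then obtain t where "x = t *\<^sub>R g" "a = t * p g" by auto
  then show "(c *\<^sub>R x, c*a) \<in> {(t *\<^sub>R g, t * p g) | t. True}"
    by (intro CollectI exI[of _ "c*t"]) simp
next
  show "(g, p g) \<in> {(t *\<^sub>R g, t * p g) | t. True}"
    by (intro CollectI exI[of _ 1]) simp
next
  fix x a
  assume "(x,a) \<in> {(t *\<^sub>R g, t * p g) | t. True}"
  then obtain t where "x = t *\<^sub>R g" "a = t * p g" by auto
  then show "a \<le> p x" using dom_line by simp
qed

lemma good_scale: "hb_good p g M \<Longrightarrow> (x,a) \<in> M \<Longrightarrow> (c *\<^sub>R x, c*a) \<in> M"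
  unfolding hb_good_def by blast
lemma good_add: "hb_good p g M \<Longrightarrow> (x,a) \<in> M \<Longrightarrow> (y,b) \<in> M \<Longrightarrow> (x+y, a+b) \<in> M"
  unfolding hb_good_def by blast
lemma good_fun: "hb_good p g M \<Longrightarrow> (x,a) \<in> M \<Longrightarrow> (x,b) \<in> M \<Longrightarrow> a = b"
  unfolding hb_good_def by blast
lemma good_dom: "hb_good p g M \<Longrightarrow> (x,a) \<in> M \<Longrightarrow> a \<le> p x"
  unfolding hb_good_def by blast
lemma good_0: "hb_good p g M \<Longrightarrow> (0,0) \<in> M"
  unfolding hb_good_def by blast
lemma good_g: "hb_good p g M \<Longrightarrow> (g, p g) \<in> M"
  unfolding hb_good_def by blast

lemma chain_good:
  assumes C: "C \<in> chains {Gr. hb_good p g Gr}" and ne: "C \<noteq> {}"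
  shows "hb_good p g (\<Union>C)"
proof -
  have sub: "\<And>X. X \<in> C \<Longrightarrow> hb_good p g X" using C unfolding chains_def by auto
  have ch: "\<And>X Y. X \<in> C \<Longrightarrow> Y \<in> C \<Longrightarrow> X \<subseteq> Y \<or> Y \<subseteq> X"
    using C unfolding chains_def chain_subset_def by auto
  have two: "\<exists>Z\<in>C. u \<in> Z \<and> v \<in> Z" if uu: "u \<in> \<Union>C" and vv: "v \<in> \<Union>C" for u v
  proof -
    obtain X where X: "X \<in> C" "u \<in> X" using uu by blast
    obtain Y where Y: "Y \<in> C" "v \<in> Y" using vv by blast
    show ?thesis
    proof (cases "X \<subseteq> Y")
      case True then show ?thesis using X Y by blast
    next
      case False then have "Y \<subseteq> X" using ch[OF X(1) Y(1)] by simp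
      then show ?thesis using X Y by blast
    qed
  qed
  obtain X0 where X0: "X0 \<in> C" using ne by auto
  show ?thesis unfolding hb_good_def
  proof (intro conjI allI impI)
    fix x a b assume "(x,a) \<in> \<Union>C" "(x,b) \<in> \<Union>C"
    then obtain Z where "Z \<in> C" "(x,a) \<in> Z" "(x,b) \<in> Z" using two by blast
    then show "a = b" using good_fun[OF sub] by blast
  next
    show "(0,0) \<in> \<Union>C" using X0 good_0[OF sub[OF X0]] by blast
  next
    fix x a y b assume "(x,a) \<in> \<Union>C" "(y,b) \<in> \<Union>C"
    then obtain Z where "Z \<in> C" "(x,a) \<in> Z" "(y,b) \<in> Z" using two by blast
    then show "(x+y,a+b) \<in> \<Union>C" using good_add[OF sub] by blast
  next
    fix c x a assume "(x,a) \<in> \<Union>C"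
    then obtain Z where "Z \<in> C" "(x,a) \<in> Z" by blast
    then show "(c *\<^sub>R x, c*a) \<in> \<Union>C" using good_scale[OF sub] by blast
  next
    show "(g, p g) \<in> \<Union>C" using X0 good_g[OF sub[OF X0]] by blast
  next
    fix x a assume "(x,a) \<in> \<Union>C"
    then obtain Z where "Z \<in> C" "(x,a) \<in> Z" by blast
    then show "a \<le> p x" using good_dom[OF sub] by blast
  qed
qed

lemma extend:
  assumes M: "hb_good p g M" and v: "\<forall>a. (v,a) \<notin> M"
  shows "\<exists>M'. hb_good p g M' \<and> M \<subseteq> M' \<and> M' \<noteq> M"
proof -
  define A where "A = {a - p (x - v) | x a. (x,a) \<in> M}"
  define c where "c = Sup A"
  have key: "a - p (x - v) \<le> p (y + v) - b" if "(x,a) \<in> M" "(y,b) \<in> M" for x a y b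
  proof -
    have "a + b \<le> p (x + y)" using good_dom[OF M good_add[OF M that]] .
    also have "x + y = (x - v) + (y + v)" by simp
    also have "p \<dots> \<le> p (x - v) + p (y + v)" by (rule padd)
    finally show ?thesis by simp
  qed
  have Ane: "A \<noteq> {}" using good_0[OF M] unfolding A_def by blast
  have Abdd: "bdd_above A" unfolding A_def bdd_above_def
    using key[OF _ good_0[OF M]] by auto
  have c_ge: "a - p (x - v) \<le> c" if "(x,a) \<in> M" for x a
    unfolding c_def by (rule cSup_upper[OF _ Abdd]) (use that A_def in blast)
  have c_le: "c \<le> p (y + v) - b" if "(y,b) \<in> M" for y b
    unfolding c_def by (rule cSup_least[OF Ane]) (use key that A_def in blast)
  define M' where "M' = {(x + t *\<^sub>R v, a + t * c) | x a t. (x,a) \<in> M}"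
  have M'I: "(x + t *\<^sub>R v, a + t * c) \<in> M'" if "(x,a) \<in> M" for x a t
    unfolding M'_def using that by blast
  have sub: "M \<subseteq> M'"
  proof
    fix u assume "u \<in> M"
    then obtain x a where "u = (x,a)" "(x,a) \<in> M" by (cases u) auto
    then show "u \<in> M'" using M'I[of x a 0] by simp
  qed
  have vin: "(v, c) \<in> M'" using M'I[OF good_0[OF M], of 1] by simp
  have ne: "M' \<noteq> M" using vin v by blast
  have good: "hb_good p g M'" unfolding hb_good_def
  proof (intro conjI allI impI)
    fix z a b assume za: "(z,a) \<in> M'" and zb: "(z,b) \<in> M'"
    obtain x1 a1 t1 where 1: "z = x1 + t1 *\<^sub>R v" "a = a1 + t1 * c" "(x1,a1) \<in> M"
      using za unfolding M'_def by blast
    obtain x2 a2 t2 where 2: "z = x2 + t2 *\<^sub>R v" "b = a2 + t2 * c" "(x2,a2) \<in> M"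
      using zb unfolding M'_def by blast
    have t: "t1 = t2"
    proof (rule ccontr)
      assume ne: "t1 \<noteq> t2"
      have d: "(x2 + (-1) *\<^sub>R x1, a2 + (-1) * a1) \<in> M"
        by (rule good_add[OF M 2(3) good_scale[OF M 1(3)]])
      have "(t1 - t2) *\<^sub>R v = x2 + (-1) *\<^sub>R x1" using 1(1) 2(1)
        by (simp add: algebra_simps)
      then have "(1 / (t1 - t2)) *\<^sub>R ((t1 - t2) *\<^sub>R v) = (1 / (t1 - t2)) *\<^sub>R (x2 + (-1) *\<^sub>R x1)"
        by simp
      then have "v = (1 / (t1 - t2)) *\<^sub>R (x2 + (-1) *\<^sub>R x1)" using ne
        by simp
      then show False using good_scale[OF M d, of "1 / (t1 - t2)"] v by metis
    qed
    then have "x1 = x2" using 1(1) 2(1) by simp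
    then have "a1 = a2" using good_fun[OF M 1(3)] 2(3) by simp
    then show "a = b" using 1 2 t by simp
  next
    show "(0,0) \<in> M'" using sub good_0[OF M] by blast
  next
    fix z1 a z2 b assume za: "(z1,a) \<in> M'" and zb: "(z2,b) \<in> M'"
    obtain x1 a1 t1 where 1: "z1 = x1 + t1 *\<^sub>R v" "a = a1 + t1 * c" "(x1,a1) \<in> M"
      using za unfolding M'_def by blast
    obtain x2 a2 t2 where 2: "z2 = x2 + t2 *\<^sub>R v" "b = a2 + t2 * c" "(x2,a2) \<in> M"
      using zb unfolding M'_def by blast
    have "((x1 + x2) + (t1 + t2) *\<^sub>R v, (a1 + a2) + (t1 + t2) * c) \<in> M'"
      by (rule M'I[OF good_add[OF M 1(3) 2(3)]])
    then show "(z1 + z2, a + b) \<in> M'" using 1 2 by (simp add: algebra_simps)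
  next
    fix k z a assume za: "(z,a) \<in> M'"
    obtain x1 a1 t1 where 1: "z = x1 + t1 *\<^sub>R v" "a = a1 + t1 * c" "(x1,a1) \<in> M"
      using za unfolding M'_def by blast
    have "(k *\<^sub>R x1 + (k * t1) *\<^sub>R v, k * a1 + (k * t1) * c) \<in> M'"
      by (rule M'I[OF good_scale[OF M 1(3)]])
    then show "(k *\<^sub>R z, k * a) \<in> M'" using 1 by (simp add: algebra_simps)
  next
    show "(g, p g) \<in> M'" using sub good_g[OF M] by blast
  next
    fix z a assume za: "(z,a) \<in> M'"
    obtain x a1 t where 1: "z = x + t *\<^sub>R v" "a = a1 + t * c" "(x,a1) \<in> M"
      using za unfolding M'_def by blast
    consider "t > 0" | "t = 0" | "t < 0" by linarith
    then show "a \<le> p z"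
    proof cases
      case 1
      have m: "((1/t) *\<^sub>R x, (1/t) * a1) \<in> M" by (rule good_scale[OF M \<open>(x,a1) \<in> M\<close>])
      have "c \<le> p ((1/t) *\<^sub>R x + v) - (1/t) * a1" by (rule c_le[OF m])
      then have "t * c \<le> t * p ((1/t) *\<^sub>R x + v) - a1" using 1
        by (simp add: field_simps)
      also have "t * p ((1/t) *\<^sub>R x + v) = p (t *\<^sub>R ((1/t) *\<^sub>R x + v))"
        using phom[of t] 1 by simp
      also have "t *\<^sub>R ((1/t) *\<^sub>R x + v) = x + t *\<^sub>R v" using 1
        by (simp add: scaleR_add_right)
      finally show ?thesis using \<open>z = x + t *\<^sub>R v\<close> \<open>a = a1 + t * c\<close> by simp
    next
      case 2 then show ?thesis using good_dom[OF M \<open>(x,a1) \<in> M\<close>] \<open>z = x + t *\<^sub>R v\<close> \<open>a = a1 + t * c\<close> by simp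
    next
      case 3
      define s where "s = - t"
      have s: "s > 0" using 3 s_def by simp
      have m: "((1/s) *\<^sub>R x, (1/s) * a1) \<in> M" by (rule good_scale[OF M \<open>(x,a1) \<in> M\<close>])
      have "(1/s) * a1 - p ((1/s) *\<^sub>R x - v) \<le> c" by (rule c_ge[OF m])
      then have "a1 - s * c \<le> s * p ((1/s) *\<^sub>R x - v)" using s
        by (simp add: field_simps)
      also have "s * p ((1/s) *\<^sub>R x - v) = p (s *\<^sub>R ((1/s) *\<^sub>R x - v))"
        using phom[of s] s by simp
      also have "s *\<^sub>R ((1/s) *\<^sub>R x - v) = x + t *\<^sub>R v" using s s_def
        by (simp add: scaleR_diff_right)
      finally show ?thesis using \<open>z = x + t *\<^sub>R v\<close> \<open>a = a1 + t * c\<close> s_def by simp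
    qed
  qed
  show ?thesis using good sub ne by blast
qed

theorem hahn_banach: "\<exists>\<phi>. linear \<phi> \<and> (\<forall>x. \<phi> x \<le> p x) \<and> \<phi> g = p g"
proof -
  have "\<forall>C\<in>chains {Gr. hb_good p g Gr}. \<exists>U\<in>{Gr. hb_good p g Gr}. \<forall>X\<in>C. X \<subseteq> U"
  proof
    fix C assume C: "C \<in> chains {Gr. hb_good p g Gr}"
    show "\<exists>U\<in>{Gr. hb_good p g Gr}. \<forall>X\<in>C. X \<subseteq> U"
    proof (cases "C = {}")
      case True then show ?thesis using base_good by blast
    next
      case False then show ?thesis using chain_good[OF C] by blast
    qed
  qed
  from Zorn_Lemma2[OF this] obtain M where M: "hb_good p g M"
    and max: "\<And>X. hb_good p g X \<Longrightarrow> M \<subseteq> X \<Longrightarrow> X = M" by blast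
  have tot: "\<exists>a. (v,a) \<in> M" for v
  proof (rule ccontr)
    assume "\<not> (\<exists>a. (v,a) \<in> M)"
    then obtain M' where "hb_good p g M'" "M \<subseteq> M'" "M' \<noteq> M" using extend[OF M] by blast
    then show False using max by blast
  qed
  define \<phi> where "\<phi> x = (THE a. (x,a) \<in> M)" for x
  have phi: "(x, \<phi> x) \<in> M" for x
  proof -
    obtain a where a: "(x,a) \<in> M" using tot by blast
    have "\<phi> x = a" unfolding \<phi>_def
    proof (rule the_equality)
      show "(x,a) \<in> M" by (rule a)
    next
      fix b assume "(x,b) \<in> M"
      from good_fun[OF M a this] show "b = a" by simp
    qed
    then show ?thesis using a by simp
  qed
  have phi_eq: "\<phi> x = a" if "(x,a) \<in> M" for x a using good_fun[OF M phi that] .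
  have "linear \<phi>"
  proof (rule linearI)
    fix x y show "\<phi> (x + y) = \<phi> x + \<phi> y" by (rule phi_eq[OF good_add[OF M phi phi]])
  next
    fix c x show "\<phi> (c *\<^sub>R x) = c *\<^sub>R \<phi> x" using phi_eq[OF good_scale[OF M phi]] by simp
  qed
  moreover have "\<forall>x. \<phi> x \<le> p x" using good_dom[OF M phi] by blast
  moreover have "\<phi> g = p g" by (rule phi_eq[OF good_g[OF M]])
  ultimately show ?thesis by blast
qed

end

lemma infdist_ge: "F \<noteq> {} \<Longrightarrow> (\<And>a. a \<in> F \<Longrightarrow> t \<le> dist x a) \<Longrightarrow> t \<le> infdist x F"
  by (simp add: infdist_notempty cINF_greatest)

lemma infdist_subspace_sublin:
  fixes F :: "'a::real_normed_vector set"
  assumes F: "subspace F"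
  shows "sublin (\<lambda>v. infdist v F)"
proof
  have ne: "F \<noteq> {}" using subspace_0[OF F] by blast
  fix x y :: 'a
  have "infdist (x + y) F - infdist y F \<le> dist x a" if a: "a \<in> F" for a
  proof -
    have "infdist (x + y) F - dist x a \<le> dist y b" if b: "b \<in> F" for b
    proof -
      have "infdist (x + y) F \<le> dist (x + y) (a + b)" using subspace_add[OF F a b] by (rule infdist_le)
      also have "\<dots> \<le> dist x a + dist y b" by (rule dist_triangle_add)
      finally show ?thesis by simp
    qed
    then have "infdist (x + y) F - dist x a \<le> infdist y F" by (rule infdist_ge[OF ne])
    then show ?thesis by simp
  qed
  then have "infdist (x + y) F - infdist y F \<le> infdist x F" by (rule infdist_ge[OF ne])
  then show "infdist (x + y) F \<le> infdist x F + infdist y F" by simp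
next
  have ne: "F \<noteq> {}" using subspace_0[OF F] by blast
  fix c :: real and x :: 'a assume c: "c \<ge> 0"
  show "infdist (c *\<^sub>R x) F = c * infdist x F"
  proof (cases "c = 0")
    case True then show ?thesis using subspace_0[OF F] by simp
  next
    case False
    then have c: "c > 0" using c by simp
    have le: "infdist (k *\<^sub>R u) F \<le> k * infdist u F" if k: "k > 0" for k u
    proof -
      have "infdist (k *\<^sub>R u) F / k \<le> dist u a" if a: "a \<in> F" for a
      proof -
        have "infdist (k *\<^sub>R u) F \<le> dist (k *\<^sub>R u) (k *\<^sub>R a)"
          using subspace_scale[OF F a] by (rule infdist_le)
        also have "\<dots> = k * dist u a" using k
          by (simp add: dist_norm scaleR_diff_right[symmetric])
        finally show ?thesis using k by (simp add: field_simps)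
      qed
      then have "infdist (k *\<^sub>R u) F / k \<le> infdist u F" by (rule infdist_ge[OF ne])
      then show ?thesis using k by (simp add: field_simps)
    qed
    have h: "infdist ((1/c) *\<^sub>R (c *\<^sub>R x)) F \<le> (1/c) * infdist (c *\<^sub>R x) F"
      using le[of "1/c" "c *\<^sub>R x"] c by simp
    have "(1/c) *\<^sub>R (c *\<^sub>R x) = x" using c by simp
    then have "infdist x F \<le> (1/c) * infdist (c *\<^sub>R x) F" using h by simp
    then have "c * infdist x F \<le> infdist (c *\<^sub>R x) F" using c by (simp add: pos_le_divide_eq mult.commute)
    then show ?thesis using le[OF c, of x] by simp
  qed
qed

lemma norming_functional:
  fixes y :: "'y::real_normed_vector"
  shows "\<exists>h::'y \<Rightarrow>\<^sub>L real. norm h \<le> 1 \<and> (\<forall>f::'y \<Rightarrow>\<^sub>L real. norm f \<le> 1 \<longrightarrow> blinfun_apply f y \<le> 2 * blinfun_apply h y)"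
proof -
  define A where "A = {blinfun_apply f y | f::'y \<Rightarrow>\<^sub>L real. norm f \<le> 1}"
  define s where "s = Sup A"
  have bdd: "bdd_above A" unfolding A_def bdd_above_def
  proof (intro exI allI impI ballI)
    fix a assume "a \<in> {blinfun_apply f y | f::'y \<Rightarrow>\<^sub>L real. norm f \<le> 1}"
    then obtain f :: "'y \<Rightarrow>\<^sub>L real" where "a = f y" "norm f \<le> 1" by blast
    have "a \<le> norm (f y)" using \<open>a = f y\<close> by simp
    also have "\<dots> \<le> norm f * norm y" by (rule norm_blinfun)
    also have "\<dots> \<le> 1 * norm y" by (rule mult_right_mono[OF \<open>norm f \<le> 1\<close>]) simp
    finally show "a \<le> norm y" by simp
  qed
  have ne: "A \<noteq> {}" unfolding A_def by (auto intro!: exI[of _ 0])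
  have up: "f y \<le> s" if "norm f \<le> 1" for f :: "'y \<Rightarrow>\<^sub>L real"
    unfolding s_def by (rule cSup_upper[OF _ bdd]) (use that A_def in blast)
  show ?thesis
  proof (cases "s > 0")
    case True
    then have "s / 2 < Sup A" using s_def by simp
    then obtain a where "a \<in> A" "s/2 < a" using less_cSup_iff[OF ne bdd] by blast
    then obtain h :: "'y \<Rightarrow>\<^sub>L real" where "norm h \<le> 1" "s/2 < h y" unfolding A_def by blast
    then show ?thesis using up by (intro exI[of _ h]) fastforce
  next
    case False
    then show ?thesis using up by (intro exI[of _ 0]) fastforce
  qed
qed

lemma dual_span_dense:
  assumes sep: "separable_type TYPE('y::real_normed_vector)"
    and refl: "reflexive_type TYPE('y)"
  shows "\<exists>fk :: nat \<Rightarrow> ('y \<Rightarrow>\<^sub>L real). closure (span (range fk)) = UNIV"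
proof -
  obtain D :: "'y set" where D: "countable D" "closure D = UNIV"
    using sep unfolding separable_type_def separable_space_def by auto
  have Dne: "D \<noteq> {}" using D(2) by auto
  define ys where "ys = from_nat_into D"
  have rys: "range ys = D" unfolding ys_def by (rule range_from_nat_into[OF Dne D(1)])
  have dense: "\<exists>k. dist (ys k) w < e" if "e > 0" for w e
  proof -
    have "w \<in> closure D" using D(2) by simp
    then have "\<exists>d\<in>D. dist d w < e" using that by (meson closure_approachable)
    then obtain d where "d \<in> D" "dist d w < e" by blast
    then show ?thesis using rys by (metis imageE)
  qed
  define fk where "fk k = (SOME h::'y \<Rightarrow>\<^sub>L real. norm h \<le> 1 \<and> (\<forall>f::'y \<Rightarrow>\<^sub>L real. norm f \<le> 1 \<longrightarrow> blinfun_apply f (ys k) \<le> 2 * blinfun_apply h (ys k)))" for k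
  have fk: "norm (fk k) \<le> 1" "\<And>f. norm f \<le> 1 \<Longrightarrow> blinfun_apply f (ys k) \<le> 2 * blinfun_apply (fk k) (ys k)" for k
    using someI_ex[OF norming_functional[of "ys k"]] unfolding fk_def by blast+
  define F0 where "F0 = span (range fk)"
  have F0: "subspace F0" unfolding F0_def by simp
  interpret sublin "\<lambda>v. infdist v F0" by (rule infdist_subspace_sublin[OF F0])
  have "g \<in> closure F0" for g
  proof (rule ccontr)
    assume g: "g \<notin> closure F0"
    have F0ne: "F0 \<noteq> {}" using subspace_0[OF F0] by blast
    have pg: "infdist g F0 > 0"
      using g in_closure_iff_infdist_zero[OF F0ne] infdist_nonneg[of g F0] by force
    obtain \<Phi> where \<Phi>: "linear \<Phi>" "\<And>v. \<Phi> v \<le> infdist v F0" "\<Phi> g = infdist g F0"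
      using hahn_banach[of g] by blast
    have bnd: "\<Phi> v \<le> norm v" for v
    proof -
      have "infdist v F0 \<le> dist v 0" using subspace_0[OF F0] by (rule infdist_le)
      then show ?thesis using \<Phi>(2)[of v] by simp
    qed
    have absb: "norm (\<Phi> v) \<le> norm v * 1" for v
      using bnd[of v] bnd[of "-v"] linear_neg[OF \<Phi>(1), of v] by auto
    have bl: "bounded_linear \<Phi>"
      using \<Phi>(1) absb by (intro bounded_linear_intro[of _ 1]) (auto simp: linear_add linear_scale)
    obtain w where w: "\<And>f. blinfun_apply (Blinfun \<Phi>) f = blinfun_apply f w"
      using refl unfolding reflexive_type_def by blast
    have w': "\<Phi> f = f w" for f using w[of f] bounded_linear_Blinfun_apply[OF bl] by simp
    have zero_k: "fk k w = 0" for k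
    proof -
      have "fk k \<in> F0" unfolding F0_def by (simp add: span_base)
      then have "infdist (fk k) F0 = 0" "infdist (- fk k) F0 = 0"
        using subspace_neg[OF F0] by auto
      then have "\<Phi> (fk k) \<le> 0" "\<Phi> (- fk k) \<le> 0" using \<Phi>(2) by metis+
      then show ?thesis using linear_neg[OF \<Phi>(1)] w' by (metis neg_le_0_iff_le order_antisym_conv)
    qed
    have le0: "f w \<le> 0" if f: "norm f \<le> 1" for f :: "'y \<Rightarrow>\<^sub>L real"
    proof (rule field_le_epsilon)
      fix e :: real assume e: "e > 0"
      obtain k where k: "dist (ys k) w < e / 3" using dense[of "e/3" w] e by auto
      have a: "f w - f (ys k) \<le> dist (ys k) w"
      proof -
        have "f w - f (ys k) = f (w - ys k)" by (simp add: blinfun.diff_right)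
        also have "\<dots> \<le> norm (f (w - ys k))" by simp
        also have "\<dots> \<le> norm f * norm (w - ys k)" by (rule norm_blinfun)
        also have "\<dots> \<le> 1 * norm (w - ys k)" by (rule mult_right_mono[OF f]) simp
        finally show ?thesis by (simp add: dist_norm norm_minus_commute)
      qed
      have b: "fk k (ys k) \<le> dist (ys k) w"
      proof -
        have "fk k (ys k) = fk k (ys k - w)" using zero_k[of k] by (simp add: blinfun.diff_right)
        also have "\<dots> \<le> norm (fk k (ys k - w))" by simp
        also have "\<dots> \<le> norm (fk k) * norm (ys k - w)" by (rule norm_blinfun)
        also have "\<dots> \<le> 1 * norm (ys k - w)" by (rule mult_right_mono[OF fk(1)]) simp
        finally show ?thesis by (simp add: dist_norm)
      qed
      show "f w \<le> 0 + e" using a b fk(2)[OF f, of k] k by linarith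
    qed
    have all0: "f w = 0" for f :: "'y \<Rightarrow>\<^sub>L real"
    proof (cases "f = 0")
      case True then show ?thesis by simp
    next
      case False
      then have nf: "norm f > 0" by simp
      have "norm ((1 / norm f) *\<^sub>R f) \<le> 1" "norm ((1 / norm f) *\<^sub>R (-f)) \<le> 1"
        using nf by simp_all
      from le0[OF this(1)] le0[OF this(2)]
      have "(1 / norm f) * f w \<le> 0" "- ((1 / norm f) * f w) \<le> 0"
        by (simp_all add: blinfun.scaleR_left blinfun.minus_left)
      then have "(1 / norm f) * f w = 0" by linarith
      then show ?thesis using nf by simp
    qed
    show False using all0[of g] w'[of g] \<Phi>(3) pg by simp
  qed
  then show ?thesis unfolding F0_def by blast
qed


lemma sep_seq:
  assumes sep: "separable_type TYPE('a::metric_space)"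
  shows "\<exists>zs :: nat \<Rightarrow> 'a. closure (range zs) = UNIV"
proof -
  obtain D :: "'a set" where D: "countable D" "closure D = UNIV"
    using sep unfolding separable_type_def separable_space_def by auto
  have Dne: "D \<noteq> {}" using D(2) by auto
  have "range (from_nat_into D) = D" by (rule range_from_nat_into[OF Dne D(1)])
  then show ?thesis using D(2) by metis
qed

lemma gd_unique:
  assumes "gateaux_deriv S y G1" "gateaux_deriv S y G2"
  shows "G1 = G2"
proof (rule blinfun_eqI)
  fix z
  show "blinfun_apply G1 z = blinfun_apply G2 z"
  proof -
    have l1: "((\<lambda>t. (1 / t) *\<^sub>R (S (y + t *\<^sub>R z) - S y)) \<longlongrightarrow> blinfun_apply G1 z) (at_right 0)"
      using assms(1) unfolding gateaux_deriv_def by blast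
    have l2: "((\<lambda>t. (1 / t) *\<^sub>R (S (y + t *\<^sub>R z) - S y)) \<longlongrightarrow> blinfun_apply G2 z) (at_right 0)"
      using assms(2) unfolding gateaux_deriv_def by blast
    show ?thesis by (rule tendsto_unique[OF trivial_limit_at_right_real l1 l2])
  qed
qed

lemma gd_points:
  assumes "y \<in> gateaux_points S"
  shows "gateaux_deriv S y (gateaux_derivative S y)"
proof -
  obtain G where G: "gateaux_deriv S y G" using assms unfolding gateaux_points_def by blast
  have "gateaux_derivative S y = G" unfolding gateaux_derivative_def
  proof (rule the_equality)
    show "gateaux_deriv S y G" by (rule G)
  next
    fix G' assume "gateaux_deriv S y G'" then show "G' = G" by (rule gd_unique[OF _ G])
  qed
  then show ?thesis using G by simp
qed

lemma deriv_bound: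
  fixes S :: "'x::real_normed_vector \<Rightarrow> 'y::real_normed_vector"
  assumes Lip: "\<And>x1 x2. norm (x1 - x) \<le> \<epsilon> \<Longrightarrow> norm (x2 - x) \<le> \<epsilon> \<Longrightarrow>
                  norm (S x1 - S x2) \<le> C * norm (x1 - x2)"
    and y: "norm (y - x) \<le> \<epsilon> / 2" and G: "gateaux_deriv S y G" and eps: "\<epsilon> > 0"
  shows "norm (blinfun_apply G z) \<le> C * norm z"
proof -
  have lim: "((\<lambda>t. (1 / t) *\<^sub>R (S (y + t *\<^sub>R z) - S y)) \<longlongrightarrow> blinfun_apply G z) (at_right 0)"
    using G unfolding gateaux_deriv_def by blast
  define d where "d = \<epsilon> / (2 * (norm z + 1))"
  have "2 * (norm z + 1) > 0" by (smt (verit) norm_ge_zero)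
  then have d: "d > 0" using eps unfolding d_def by (rule divide_pos_pos[rotated])
  have ev: "eventually (\<lambda>t. norm ((1 / t) *\<^sub>R (S (y + t *\<^sub>R z) - S y)) \<le> C * norm z) (at_right (0::real))"
  proof -
  have "norm ((1 / t) *\<^sub>R (S (y + t *\<^sub>R z) - S y)) \<le> C * norm z" if t: "0 < t \<and> t < d" for t :: real
  proof -
    have "t * norm z \<le> d * (norm z + 1)" using t
      by (smt (verit, ccfv_SIG) mult_left_mono mult_right_mono norm_ge_zero)
    also have "\<dots> = \<epsilon> / 2"
    proof -
      have nz: "2 + norm z * 2 \<noteq> 0" "norm z + 1 \<noteq> 0" by (smt (verit) norm_ge_zero)+
      show ?thesis unfolding d_def using nz by (simp add: field_simps)
    qed
    finally have tz: "t * norm z \<le> \<epsilon> / 2" .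
    have "norm (y + t *\<^sub>R z - x) \<le> norm (y - x) + norm (t *\<^sub>R z)"
      by (metis add.commute add_diff_eq norm_triangle_ineq)
    also have "\<dots> \<le> \<epsilon>" using y tz t by simp
    finally have n1: "norm (y + t *\<^sub>R z - x) \<le> \<epsilon>" .
    have n2: "norm (y - x) \<le> \<epsilon>" using y eps by simp
    have "norm (S (y + t *\<^sub>R z) - S y) \<le> C * norm (y + t *\<^sub>R z - y)" by (rule Lip[OF n1 n2])
    then have "norm (S (y + t *\<^sub>R z) - S y) \<le> C * (t * norm z)" using t by simp
    then have h: "norm (S (y + t *\<^sub>R z) - S y) \<le> C * (t * norm z)" .
    have "norm ((1 / t) *\<^sub>R (S (y + t *\<^sub>R z) - S y)) = (1 / t) * norm (S (y + t *\<^sub>R z) - S y)"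
      using t by simp
    also have "\<dots> \<le> (1 / t) * (C * (t * norm z))" by (rule mult_left_mono[OF h]) (use t in simp)
    also have "\<dots> = C * norm z" using t by simp
    finally show "norm ((1 / t) *\<^sub>R (S (y + t *\<^sub>R z) - S y)) \<le> C * norm z" .
  qed
  then show ?thesis unfolding eventually_at_right[OF d] using d by blast
  qed
  show ?thesis by (rule Lim_norm_ubound[OF trivial_limit_at_right_real lim ev])
qed

lemma conv_span_closure:
  fixes \<phi>s :: "nat \<Rightarrow> 'a::real_normed_vector \<Rightarrow> real"
  assumes lin: "\<And>n. linear (\<phi>s n)" and bl: "bounded_linear \<phi>"
    and bnd: "eventually (\<lambda>n. \<forall>v. \<bar>\<phi>s n v\<bar> \<le> B * norm v) sequentially"
    and D: "\<And>d. d \<in> D \<Longrightarrow> (\<lambda>n. \<phi>s n d) \<longlonglongrightarrow> \<phi> d"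
  shows "closure (span D) \<subseteq> {v. (\<lambda>n. \<phi>s n v) \<longlonglongrightarrow> \<phi> v}"
proof -
  define T where "T = {v. (\<lambda>n. \<phi>s n v) \<longlonglongrightarrow> \<phi> v}"
  have lin\<phi>: "linear \<phi>" using bl bounded_linear.linear by blast
  have sT: "subspace T" unfolding subspace_def T_def
  proof (intro conjI ballI allI)
    show "0 \<in> {v. (\<lambda>n. \<phi>s n v) \<longlonglongrightarrow> \<phi> v}" using linear_0[OF lin] linear_0[OF lin\<phi>] by simp
  next
    fix u v assume "u \<in> {v. (\<lambda>n. \<phi>s n v) \<longlonglongrightarrow> \<phi> v}" "v \<in> {v. (\<lambda>n. \<phi>s n v) \<longlonglongrightarrow> \<phi> v}"
    then show "u + v \<in> {v. (\<lambda>n. \<phi>s n v) \<longlonglongrightarrow> \<phi> v}"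
      using tendsto_add linear_add[OF lin] linear_add[OF lin\<phi>] by fastforce
  next
    fix c :: real and v assume "v \<in> {v. (\<lambda>n. \<phi>s n v) \<longlonglongrightarrow> \<phi> v}"
    then show "c *\<^sub>R v \<in> {v. (\<lambda>n. \<phi>s n v) \<longlonglongrightarrow> \<phi> v}"
      using tendsto_mult_left[of "\<lambda>n. \<phi>s n v" "\<phi> v" sequentially c]
        linear_scale[OF lin] linear_scale[OF lin\<phi>] by simp
  qed
  have spanT: "span D \<subseteq> T" by (rule span_minimal) (use D sT T_def in auto)
  obtain K where K: "K > 0" "\<And>u. norm (\<phi> u) \<le> norm u * K"
    using bounded_linear.pos_bounded[OF bl] by blast
  have "v \<in> T" if v: "v \<in> closure (span D)" for v
    unfolding T_def mem_Collect_eq tendsto_iff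
  proof (intro allI impI)
    fix e :: real assume e: "e > 0"
    define d where "d = e / (2 * (\<bar>B\<bar> + K + 1))"
    have d: "d > 0" using e K by (simp add: d_def)
    have "\<exists>u\<in>span D. dist u v < d" using v d by (meson closure_approachable)
    then obtain u where u: "u \<in> span D" "dist u v < d" by blast
    have uT: "(\<lambda>n. \<phi>s n u) \<longlonglongrightarrow> \<phi> u" using spanT u(1) T_def by blast
    have e2: "e / 2 > 0" using e by simp
    have ev1: "eventually (\<lambda>n. dist (\<phi>s n u) (\<phi> u) < e / 2) sequentially"
      using uT e2 unfolding tendsto_iff by blast
    show "eventually (\<lambda>n. dist (\<phi>s n v) (\<phi> v) < e) sequentially"
      using ev1 bnd
    proof eventually_elim
      case (elim n)
      have nd: "norm (v - u) < d" using u(2) by (simp add: dist_norm norm_minus_commute)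
      have a: "\<bar>\<phi>s n (v - u)\<bar> \<le> \<bar>B\<bar> * d"
        using elim(2) nd by (smt (verit) abs_ge_self mult_mono norm_ge_zero)
      have b: "\<bar>\<phi> (u - v)\<bar> \<le> K * d"
        using K(2)[of "u - v"] nd K(1) by (simp add: norm_minus_commute mult.commute)
          (smt (verit) mult_left_mono)
      have "\<phi>s n v - \<phi> v = \<phi>s n (v - u) + (\<phi>s n u - \<phi> u) + \<phi> (u - v)"
        using linear_diff[OF lin] linear_diff[OF lin\<phi>] by simp
      have tri: "\<bar>X + Y + Z\<bar> \<le> \<bar>X\<bar> + \<bar>Y\<bar> + \<bar>Z\<bar>" for X Y Z :: real
        using abs_triangle_ineq[of "X+Y" Z] abs_triangle_ineq[of X Y] by linarith
      have "\<bar>\<phi>s n u - \<phi> u\<bar> < e / 2" using elim(1) by (simp add: dist_real_def)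
      then have "\<bar>\<phi>s n v - \<phi> v\<bar> \<le> \<bar>B\<bar> * d + e / 2 + K * d"
        using a b tri[of "\<phi>s n (v - u)" "\<phi>s n u - \<phi> u" "\<phi> (u - v)"]
          \<open>\<phi>s n v - \<phi> v = _\<close> by linarith
      also have "\<bar>B\<bar> * d + K * d < e / 2"
      proof -
        have "(\<bar>B\<bar> + K) * d < (\<bar>B\<bar> + K + 1) * d" using d by simp
        also have "\<dots> = e / 2" unfolding d_def using K(1) by (simp add: field_simps)
        finally show ?thesis by (simp add: algebra_simps)
      qed
      then show ?case using calculation by (simp add: dist_real_def)
    qed
  qed
  then show ?thesis unfolding T_def by blast
qed

theorem mainTheorem3:
  fixes M :: "'w measure" and q r :: ennreal
    and \<iota> :: "'y::banach \<Rightarrow> 'w \<Rightarrow> real" and j :: "'u::banach \<Rightarrow> 'x::banach"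
    and S :: "'x \<Rightarrow> 'y"
    and xs :: "nat \<Rightarrow> 'x" and x :: 'x
    and Gs :: "nat \<Rightarrow> ('x \<Rightarrow>\<^sub>L 'y)" and G :: "'x \<Rightarrow>\<^sub>L 'y"
  assumes "standing_assumptions M q r \<iota> j S"
    and "xs \<longlonglongrightarrow> x"
    and "\<And>n. Gs n \<in> bouligand_sw S (xs n)"
    and "wot_tendsto Gs G"
  shows "G \<in> bouligand_sw S x"
proof -
  note st = assms(1)[unfolded standing_assumptions_def]
  have sepY: "separable_type TYPE('y)" using st by (elim conjE)
  have reflY: "reflexive_type TYPE('y)" using st by (elim conjE)
  have sepX: "separable_type TYPE('x)" using st by (elim conjE)
  have lipall: "\<forall>x. \<exists>C>0. \<exists>\<epsilon>>0.
        (\<forall>x1 x2. norm (x1 - x) \<le> \<epsilon> \<and> norm (x2 - x) \<le> \<epsilon> \<longrightarrow>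
                  norm (S x1 - S x2) \<le> C * norm (x1 - x2)) \<and>
        (\<forall>x1 z. norm (x1 - x) \<le> \<epsilon> \<and> norm z \<le> \<epsilon> \<longrightarrow>
                  Lp_norm M r (\<lambda>w. \<iota> (S (x1 + j z)) w - \<iota> (S x1) w) \<le> ennreal (C * norm z))"
    using st by (elim conjE)
  from lipall[rule_format, of x] obtain C \<epsilon> where C: "C > 0" and eps: "\<epsilon> > 0"
    and Lip0: "\<forall>x1 x2. norm (x1 - x) \<le> \<epsilon> \<and> norm (x2 - x) \<le> \<epsilon> \<longrightarrow>
                  norm (S x1 - S x2) \<le> C * norm (x1 - x2)"
    by blast
  have Lip: "\<And>x1 x2. norm (x1 - x) \<le> \<epsilon> \<Longrightarrow> norm (x2 - x) \<le> \<epsilon> \<Longrightarrow>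
                  norm (S x1 - S x2) \<le> C * norm (x1 - x2)" using Lip0 by blast
  obtain zs :: "nat \<Rightarrow> 'x" where zs: "closure (range zs) = UNIV" using sep_seq[OF sepX] by blast
  obtain fk :: "nat \<Rightarrow> ('y \<Rightarrow>\<^sub>L real)" where fk: "closure (span (range fk)) = UNIV"
    using dual_span_dense[OF sepY reflY] by blast
  have "\<forall>n. \<exists>xs'. (\<forall>m. xs' m \<in> gateaux_points S) \<and> xs' \<longlonglongrightarrow> xs n \<and>
            wot_tendsto (\<lambda>m. gateaux_derivative S (xs' m)) (Gs n)"
  proof
    fix n show "\<exists>xs'. (\<forall>m. xs' m \<in> gateaux_points S) \<and> xs' \<longlonglongrightarrow> xs n \<and>
            wot_tendsto (\<lambda>m. gateaux_derivative S (xs' m)) (Gs n)"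
      using assms(3)[of n] unfolding bouligand_sw_def by (rule CollectD)
  qed
  then obtain X where X0: "\<forall>n. (\<forall>m. X n m \<in> gateaux_points S) \<and> X n \<longlonglongrightarrow> xs n \<and>
            wot_tendsto (\<lambda>m. gateaux_derivative S (X n m)) (Gs n)" by (metis choice)
  have X: "\<And>n m. X n m \<in> gateaux_points S" "\<And>n. X n \<longlonglongrightarrow> xs n"
    "\<And>n. wot_tendsto (\<lambda>m. gateaux_derivative S (X n m)) (Gs n)" using X0 by blast+
  define Dr where "Dr n m = gateaux_derivative S (X n m)" for n m
  have "\<exists>m. dist (X n m) (xs n) < inverse (real (Suc n)) \<and>
          (\<forall>ik\<in>{..n}\<times>{..n}. \<bar>fk (snd ik) (Dr n m (zs (fst ik))) - fk (snd ik) (Gs n (zs (fst ik)))\<bar>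
             < inverse (real (Suc n)))" for n
  proof -
    have e: "inverse (real (Suc n)) > 0" by simp
    have ev1: "eventually (\<lambda>m. dist (X n m) (xs n) < inverse (real (Suc n))) sequentially"
      using X(2)[of n] e unfolding tendsto_iff by blast
    have ev2: "eventually (\<lambda>m. \<forall>ik\<in>{..n}\<times>{..n}.
        \<bar>fk (snd ik) (Dr n m (zs (fst ik))) - fk (snd ik) (Gs n (zs (fst ik)))\<bar> < inverse (real (Suc n))) sequentially"
    proof (rule eventually_ball_finite)
      show "finite ({..n}\<times>{..n})" by simp
      show "\<forall>ik\<in>{..n}\<times>{..n}. eventually (\<lambda>m.
        \<bar>fk (snd ik) (Dr n m (zs (fst ik))) - fk (snd ik) (Gs n (zs (fst ik)))\<bar> < inverse (real (Suc n))) sequentially"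
      proof
        fix ik :: "nat \<times> nat"
        have "(\<lambda>m. fk (snd ik) (Dr n m (zs (fst ik)))) \<longlonglongrightarrow> fk (snd ik) (Gs n (zs (fst ik)))"
          using X(3)[of n] unfolding wot_tendsto_def weakly_tendsto_def Dr_def by blast
        then show "eventually (\<lambda>m.
          \<bar>fk (snd ik) (Dr n m (zs (fst ik))) - fk (snd ik) (Gs n (zs (fst ik)))\<bar> < inverse (real (Suc n))) sequentially"
          using e unfolding tendsto_iff dist_real_def by blast
      qed
    qed
    obtain N where "\<forall>m\<ge>N. dist (X n m) (xs n) < inverse (real (Suc n)) \<and>
        (\<forall>ik\<in>{..n}\<times>{..n}. \<bar>fk (snd ik) (Dr n m (zs (fst ik))) - fk (snd ik) (Gs n (zs (fst ik)))\<bar>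
             < inverse (real (Suc n)))"
      using eventually_conj[OF ev1 ev2] unfolding eventually_sequentially by blast
    then show ?thesis by blast
  qed
  then have "\<forall>n. \<exists>m. dist (X n m) (xs n) < inverse (real (Suc n)) \<and>
          (\<forall>ik\<in>{..n}\<times>{..n}. \<bar>fk (snd ik) (Dr n m (zs (fst ik))) - fk (snd ik) (Gs n (zs (fst ik)))\<bar>
             < inverse (real (Suc n)))" by blast
  from choice[OF this] obtain mm where mm0: "\<forall>n. dist (X n (mm n)) (xs n) < inverse (real (Suc n)) \<and>
          (\<forall>ik\<in>{..n}\<times>{..n}. \<bar>fk (snd ik) (Dr n (mm n) (zs (fst ik))) - fk (snd ik) (Gs n (zs (fst ik)))\<bar>
             < inverse (real (Suc n)))" by blast
  have mm1: "\<And>n. dist (X n (mm n)) (xs n) < inverse (real (Suc n))" using mm0 by blast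
  have mm2: "\<bar>fk k (Dr n (mm n) (zs i)) - fk k (Gs n (zs i))\<bar> < inverse (real (Suc n))"
    if "i \<le> n" "k \<le> n" for n i k
  proof -
    have "(i, k) \<in> {..n}\<times>{..n}" using that by simp
    then show ?thesis using mm0 by fastforce
  qed
  note mm = mm1 mm2
  define xt where "xt n = X n (mm n)" for n
  define Dt where "Dt n = gateaux_derivative S (xt n)" for n
  have Dt_Dr: "Dt n = Dr n (mm n)" for n unfolding Dt_def Dr_def xt_def by simp
  have xt_pts: "xt n \<in> gateaux_points S" for n unfolding xt_def by (rule X(1))
  have inv0: "(\<lambda>n. inverse (real (Suc n))) \<longlonglongrightarrow> 0" by (rule LIMSEQ_inverse_real_of_nat)
  have "(\<lambda>n. xt n - xs n) \<longlonglongrightarrow> 0"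
  proof (rule Lim_null_comparison[OF _ inv0])
    show "eventually (\<lambda>n. norm (xt n - xs n) \<le> inverse (real (Suc n))) sequentially"
      using mm(1) unfolding xt_def dist_norm by (simp add: less_imp_le)
  qed
  from tendsto_add[OF this assms(2)] have xt_lim: "xt \<longlonglongrightarrow> x" by simp
  have e2: "\<epsilon> / 2 > 0" using eps by simp
  have "eventually (\<lambda>n. dist (xt n) x < \<epsilon> / 2) sequentially"
    using xt_lim e2 unfolding tendsto_iff by blast
  then have ev_near: "eventually (\<lambda>n. norm (xt n - x) \<le> \<epsilon> / 2) sequentially"
    by eventually_elim (simp add: dist_norm)
  have bnd: "eventually (\<lambda>n. \<forall>z. norm (Dt n z) \<le> C * norm z) sequentially"
    using ev_near
  proof eventually_elim
    case (elim n)
    show ?case using deriv_bound[OF Lip elim gd_points[OF xt_pts] eps] unfolding Dt_def by blast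
  qed
  have fz: "(\<lambda>n. fk k (Dt n (zs i))) \<longlonglongrightarrow> fk k (G (zs i))" for i k
  proof -
    have g: "(\<lambda>n. fk k (Gs n (zs i))) \<longlonglongrightarrow> fk k (G (zs i))"
      using assms(4) unfolding wot_tendsto_def weakly_tendsto_def by blast
    have "(\<lambda>n. fk k (Dt n (zs i)) - fk k (Gs n (zs i))) \<longlonglongrightarrow> 0"
    proof (rule Lim_null_comparison[OF _ inv0])
      have "eventually (\<lambda>n. n \<ge> max i k) sequentially" by (rule eventually_ge_at_top)
      then show "eventually (\<lambda>n. norm (fk k (Dt n (zs i)) - fk k (Gs n (zs i))) \<le> inverse (real (Suc n))) sequentially"
      proof eventually_elim
        case (elim n)
        then show ?case using mm(2)[of i n k] unfolding Dt_Dr by simp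
      qed
    qed
    from tendsto_add[OF this g] show ?thesis by simp
  qed
  have all_f: "(\<lambda>n. f (Dt n (zs i))) \<longlonglongrightarrow> f (G (zs i))" for i and f :: "'y \<Rightarrow>\<^sub>L real"
  proof -
    have "closure (span (range fk)) \<subseteq> {f. (\<lambda>n. (\<lambda>f. blinfun_apply f (Dt n (zs i))) f) \<longlonglongrightarrow> (\<lambda>f. blinfun_apply f (G (zs i))) f}"
    proof (rule conv_span_closure[where B = "C * norm (zs i)"])
      show "linear (\<lambda>f. blinfun_apply f (Dt n (zs i)))" for n
        using blinfun.bounded_linear_left bounded_linear.linear by blast
      show "bounded_linear (\<lambda>f. blinfun_apply f (G (zs i)))" by (rule blinfun.bounded_linear_left)
      show "eventually (\<lambda>n. \<forall>f. \<bar>blinfun_apply f (Dt n (zs i))\<bar> \<le> C * norm (zs i) * norm f) sequentially"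
        using bnd
      proof eventually_elim
        case (elim n)
        show ?case
        proof
          fix f :: "'y \<Rightarrow>\<^sub>L real"
          have "\<bar>f (Dt n (zs i))\<bar> \<le> norm f * norm (Dt n (zs i))" using norm_blinfun[of f] by simp
          also have "\<dots> \<le> norm f * (C * norm (zs i))" by (rule mult_left_mono[OF elim[rule_format] norm_ge_zero])
          finally show "\<bar>f (Dt n (zs i))\<bar> \<le> C * norm (zs i) * norm f" by (simp add: ac_simps)
        qed
      qed
      show "(\<lambda>n. blinfun_apply d (Dt n (zs i))) \<longlonglongrightarrow> blinfun_apply d (G (zs i))" if "d \<in> range fk" for d
        using that fz by blast
    qed
    then show ?thesis using fk by auto
  qed
  have all_z: "(\<lambda>n. f (Dt n z)) \<longlonglongrightarrow> f (G z)" for z and f :: "'y \<Rightarrow>\<^sub>L real"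
  proof -
    have "closure (span (range zs)) \<subseteq> {z. (\<lambda>n. (\<lambda>z. blinfun_apply f (Dt n z)) z) \<longlonglongrightarrow> (\<lambda>z. blinfun_apply f (G z)) z}"
    proof (rule conv_span_closure[where B = "norm f * C"])
      show "linear (\<lambda>z. blinfun_apply f (Dt n z))" for n
        by (rule bounded_linear.linear, rule bounded_linear_compose[OF blinfun.bounded_linear_right blinfun.bounded_linear_right])
      show "bounded_linear (\<lambda>z. blinfun_apply f (G z))"
        by (rule bounded_linear_compose[OF blinfun.bounded_linear_right blinfun.bounded_linear_right])
      show "eventually (\<lambda>n. \<forall>z. \<bar>blinfun_apply f (Dt n z)\<bar> \<le> norm f * C * norm z) sequentially"
        using bnd
      proof eventually_elim
        case (elim n)
        show ?case
        proof
          fix z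
          have "\<bar>f (Dt n z)\<bar> \<le> norm f * norm (Dt n z)" using norm_blinfun[of f] by simp
          also have "\<dots> \<le> norm f * (C * norm z)" by (rule mult_left_mono[OF elim[rule_format] norm_ge_zero])
          finally show "\<bar>f (Dt n z)\<bar> \<le> norm f * C * norm z" by (simp add: ac_simps)
        qed
      qed
      show "(\<lambda>n. blinfun_apply f (Dt n d)) \<longlonglongrightarrow> blinfun_apply f (G d)" if "d \<in> range zs" for d
        using that all_f by blast
    qed
    moreover have "closure (range zs) \<subseteq> closure (span (range zs))"
      by (rule closure_mono) (rule span_superset)
    ultimately show ?thesis using zs by auto
  qed
  have "wot_tendsto Dt G" unfolding wot_tendsto_def weakly_tendsto_def using all_z by blast
  then show ?thesis unfolding bouligand_sw_def Dt_def using xt_pts xt_lim by blast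
qed

end
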